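(* The suspension $\Sigma \widetilde C$ is $\mathcal{S}$-chain homotopy equivalent to $\widetilde C\otimes \widetilde{\mathcal{O}}(1)$.
   Context: Let $R$ be a commutative ring. An $\mathcal{S}$-complex over $R$ is a finitely generated free chain complex $(\widetilde C,\widetilde d)$ over $R$ with a graded module decomposition $\widetilde C = C\oplus C[-1]\oplus \mathsf{R}$ (where $C[i]_j=C_{i+j}$) such that, with respect to this decomposition, $\widetilde d=\begin{bmatrix} d&0&0\\ v&-d&\delta_2\\ \delta_1&0&r\end{bmatrix}$; equivalently it is a dg-module over $\Lambda_R(\chi)=R[\chi]/(\chi^2)$, $\deg\chi=1$, with $\chi$ mapping $C$ identically onto $C[-1]$ and zero otherwise. Morphisms are degree $0$ chain maps commuting with $\chi$, and $\mathcal{S}$-chain homotopies are chain homotopies anticommuting with $\chi$. The suspension $\Sigma\widetilde C=\widetilde C_\Sigma$ is the $\mathcal{S}$-complex $\widetilde C_\Sigma = C_\Sigma\oplus C_\Sigma[-1]\oplus\mathsf{R}$ with $C_\Sigma=C[-2]\oplus\mathsf{R}[-1]$ and differential, in block form with respect to $C[-2]\oplus\mathsf{R}[-1]\,|\,C[-3]\oplus \mathsf{R}[-2]\,|\,\mathsf{R}$, given by rows $(d,\,-\delta_2\,|\,0,\,0\,|\,0)$, $(0,\,-r\,|\,0,\,0\,|\,0)$, $(v,\,0\,|\,-d,\,\delta_2\,|\,v\delta_2)$, $(\delta_1,\,0\,|\,0,\,r\,|\,\delta_1\delta_2)$, $(0,\,1\,|\,0,\,0\,|\,r)$. The standard $\mathcal{S}$-complex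 $\widetilde{\mathcal{O}}(1)$ has $C=R$ in degree $1$, $\mathsf{R}=R$ in degree $0$, $d=v=\delta_2=0$ (and $r=0$), and $\delta_1:R_{(1)}\to R_{(0)}$ an isomorphism. The tensor product of $\mathcal{S}$-complexes is the tensor product chain complex with $\chi$-action $\chi\otimes 1+\varepsilon\otimes\chi'$, where $\varepsilon$ multiplies a homogeneous element of degree $i$ by $(-1)^i$. *)

theory Defs
  imports Main
begin

text \<open>Finitely generated free graded modules over a commutative ring 'a are represented
  by a finite basis type 'b together with a degree function 'b => int; elements are
  coefficient functions 'b => 'a. Homogeneous module maps are matrices
  M :: 'out => 'in => 'a (M i j = coefficient of basis element i in the image of j).\<close>

definition mmul :: "('b \<Rightarrow> 'c::finite \<Rightarrow> 'a::comm_ring_1) \<Rightarrow> ('c \<Rightarrow> 'd \<Rightarrow> 'a) \<Rightarrow> 'b \<Rightarrow> 'd \<Rightarrow> 'a" where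
  "mmul A B i k = (\<Sum>j\<in>UNIV. A i j * B j k)"

definition mid :: "'b \<Rightarrow> 'b \<Rightarrow> 'a::comm_ring_1" where
  "mid i j = (if i = j then 1 else 0)"

definition graded :: "('b \<Rightarrow> int) \<Rightarrow> ('c \<Rightarrow> int) \<Rightarrow> int \<Rightarrow> ('b \<Rightarrow> 'c \<Rightarrow> 'a::zero) \<Rightarrow> bool" where
  "graded dout din k M \<longleftrightarrow> (\<forall>i j. M i j \<noteq> 0 \<longrightarrow> dout i = din j + k)"

text \<open>A based graded module with an odd endomorphism D (differential, degree -1) and an
  endomorphism chi (degree +1): a (candidate) dg-module over Lambda_R(chi).\<close>
record ('b, 'a) bcx =
  deg :: "'b \<Rightarrow> int"
  dif :: "'b \<Rightarrow> 'b \<Rightarrow> 'a"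
  chi :: "'b \<Rightarrow> 'b \<Rightarrow> 'a"

text \<open>Data of an S-complex: the basis 'c of C with degrees, and the blocks d, v, delta1
  (C to R, a row), delta2 (R to C[-1], a column), r (R to R).\<close>
record ('c, 'a) scx =
  cdeg :: "'c \<Rightarrow> int"
  sd :: "'c \<Rightarrow> 'c \<Rightarrow> 'a"
  sv :: "'c \<Rightarrow> 'c \<Rightarrow> 'a"
  sdelta1 :: "'c \<Rightarrow> 'a"
  sdelta2 :: "'c \<Rightarrow> 'a"
  sr :: 'a

text \<open>The total complex C~ = C (+) C[-1] (+) R, basis  Inl c | Inr (Inl c) | Inr (Inr ()).\<close>
definition to_bcx :: "('c, 'a::comm_ring_1) scx \<Rightarrow> ('c + 'c + unit, 'a) bcx" where
  "to_bcx X = \<lparr> deg = (\<lambda>b. case b of Inl c \<Rightarrow> cdeg X c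
                                  | Inr (Inl c) \<Rightarrow> cdeg X c + 1
                                  | Inr (Inr _) \<Rightarrow> 0),
               dif = (\<lambda>a b. case (a, b) of
                        (Inl i, Inl j) \<Rightarrow> sd X i j
                      | (Inr (Inl i), Inl j) \<Rightarrow> sv X i j
                      | (Inr (Inl i), Inr (Inl j)) \<Rightarrow> - sd X i j
                      | (Inr (Inl i), Inr (Inr _)) \<Rightarrow> sdelta2 X i
                      | (Inr (Inr _), Inl j) \<Rightarrow> sdelta1 X j
                      | (Inr (Inr _), Inr (Inr _)) \<Rightarrow> sr X
                      | _ \<Rightarrow> 0),
               chi = (\<lambda>a b. case (a, b) of
                        (Inr (Inl i), Inl j) \<Rightarrow> (if i = j then 1 else 0)
                      | _ \<Rightarrow> 0) \<rparr>"

definition is_scx :: "('c::finite, 'a::comm_ring_1) scx \<Rightarrow> bool" where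
  "is_scx X \<longleftrightarrow> graded (deg (to_bcx X)) (deg (to_bcx X)) (-1) (dif (to_bcx X))
                 \<and> mmul (dif (to_bcx X)) (dif (to_bcx X)) = (\<lambda>_ _. 0)"

text \<open>Suspension: C_Sigma = C[-2] (+) R[-1], basis Inl c | Inr ().\<close>
definition susp :: "('c::finite, 'a::comm_ring_1) scx \<Rightarrow> ('c + unit, 'a) scx" where
  "susp X = \<lparr> cdeg = (\<lambda>b. case b of Inl c \<Rightarrow> cdeg X c + 2 | Inr _ \<Rightarrow> 1),
              sd = (\<lambda>a b. case (a, b) of
                       (Inl i, Inl j) \<Rightarrow> sd X i j
                     | (Inl i, Inr _) \<Rightarrow> - sdelta2 X i
                     | (Inr _, Inl j) \<Rightarrow> 0
                     | (Inr _, Inr _) \<Rightarrow> - sr X),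
              sv = (\<lambda>a b. case (a, b) of
                       (Inl i, Inl j) \<Rightarrow> sv X i j
                     | (Inl i, Inr _) \<Rightarrow> 0
                     | (Inr _, Inl j) \<Rightarrow> sdelta1 X j
                     | (Inr _, Inr _) \<Rightarrow> 0),
              sdelta1 = (\<lambda>b. case b of Inl j \<Rightarrow> 0 | Inr _ \<Rightarrow> 1),
              sdelta2 = (\<lambda>a. case a of
                       Inl i \<Rightarrow> (\<Sum>k\<in>UNIV. sv X i k * sdelta2 X k)
                     | Inr _ \<Rightarrow> (\<Sum>k\<in>UNIV. sdelta1 X k * sdelta2 X k)),
              sr = sr X \<rparr>"

text \<open>The standard S-complex O~(1): C = R in degree 1, R in degree 0, delta1 = u
  (an isomorphism, i.e. u a unit), all other blocks zero.\<close>
definition O1 :: "'a::comm_ring_1 \<Rightarrow> (unit, 'a) scx" where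
  "O1 u = \<lparr> cdeg = (\<lambda>_. 1), sd = (\<lambda>_ _. 0), sv = (\<lambda>_ _. 0),
            sdelta1 = (\<lambda>_. u), sdelta2 = (\<lambda>_. 0), sr = 0 \<rparr>"

definition epsilon :: "int \<Rightarrow> 'a::comm_ring_1" where
  "epsilon n = (if even n then 1 else -1)"

definition tensor :: "('b, 'a::comm_ring_1) bcx \<Rightarrow> ('e, 'a) bcx \<Rightarrow> ('b \<times> 'e, 'a) bcx" where
  "tensor X Y = \<lparr> deg = (\<lambda>(i, j). deg X i + deg Y j),
                  dif = (\<lambda>(i, j) (k, l). dif X i k * mid j l + epsilon (deg X k) * mid i k * dif Y j l),
                  chi = (\<lambda>(i, j) (k, l). chi X i k * mid j l + epsilon (deg X k) * mid i k * chi Y j l) \<rparr>"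

definition s_morphism :: "('b::finite, 'a::comm_ring_1) bcx \<Rightarrow> ('e::finite, 'a) bcx \<Rightarrow> ('e \<Rightarrow> 'b \<Rightarrow> 'a) \<Rightarrow> bool" where
  "s_morphism X Y f \<longleftrightarrow> graded (deg Y) (deg X) 0 f
     \<and> mmul (dif Y) f = mmul f (dif X) \<and> mmul (chi Y) f = mmul f (chi X)"

definition s_homotopy :: "('b::finite, 'a::comm_ring_1) bcx \<Rightarrow> ('e::finite, 'a) bcx
    \<Rightarrow> ('e \<Rightarrow> 'b \<Rightarrow> 'a) \<Rightarrow> ('e \<Rightarrow> 'b \<Rightarrow> 'a) \<Rightarrow> ('e \<Rightarrow> 'b \<Rightarrow> 'a) \<Rightarrow> bool" where
  "s_homotopy X Y f g h \<longleftrightarrow> graded (deg Y) (deg X) 1 h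
     \<and> (\<forall>i j. mmul (dif Y) h i j + mmul h (dif X) i j = f i j - g i j)
     \<and> (\<forall>i j. mmul (chi Y) h i j = - mmul h (chi X) i j)"

definition s_htpy_equiv :: "('b::finite, 'a::comm_ring_1) bcx \<Rightarrow> ('e::finite, 'a) bcx \<Rightarrow> bool" where
  "s_htpy_equiv X Y \<longleftrightarrow> (\<exists>f g h k. s_morphism X Y f \<and> s_morphism Y X g
     \<and> s_homotopy X X (mmul g f) mid h \<and> s_homotopy Y Y (mmul f g) mid k)"

end

theory Submission
  imports Defs
begin

lemma sum_UNIV_plus: "(\<Sum>x\<in>(UNIV::('a::finite + 'b::finite) set). f x) = (\<Sum>x\<in>UNIV. f (Inl x)) + (\<Sum>x\<in>UNIV. f (Inr x))"
  using sum.Plus[of "UNIV::'a set" "UNIV::'b set" f] by (simp add: comp_def)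
lemma sum_UNIV_prod: "(\<Sum>x\<in>(UNIV::('a::finite \<times> 'b::finite) set). f x) = (\<Sum>a\<in>UNIV. \<Sum>b\<in>UNIV. f (a, b))"
  using sum.cartesian_product[of "\<lambda>a b. f (a,b)" "UNIV::'b set" "UNIV::'a set"] by simp
lemma sum_UNIV_unit: "(\<Sum>x\<in>(UNIV::unit set). f x) = f ()"
  by (simp add: UNIV_unit)

lemmas sums = sum_UNIV_plus sum_UNIV_prod sum_UNIV_unit

lemma if01_mult: "(if P then 1 else 0) * (x::'a::comm_ring_1) = (if P then x else 0)"
  "x * (if P then 1 else 0) = (if P then x else 0)" by auto
lemma if0_mult: "(if P then y else 0) * (x::'a::comm_ring_1) = (if P then y * x else 0)"
  "x * (if P then y else 0) = (if P then x * y else 0)" by auto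

lemma sum3_cases:
  fixes p :: "'c + 'd + unit"
  obtains (A) c where "p = Inl c" | (B) c where "p = Inr (Inl c)" | (C) "p = Inr (Inr ())"
  by (metis old.unit.exhaust sum.exhaust)
lemma u3_cases:
  fixes p :: "unit + unit + unit"
  obtains (A) "p = Inl ()" | (B) "p = Inr (Inl ())" | (C) "p = Inr (Inr ())"
  by (metis old.unit.exhaust sum.exhaust)

lemma T_cases:
  fixes t :: "('c + 'c + unit) \<times> (unit + unit + unit)"
  obtains (xa) c where "t = (Inl c, Inl ())" | (xb) c where "t = (Inl c, Inr (Inl ()))"
   | (xe) c where "t = (Inl c, Inr (Inr ()))"
   | (ya) c where "t = (Inr (Inl c), Inl ())" | (yb) c where "t = (Inr (Inl c), Inr (Inl ()))"
   | (ye) c where "t = (Inr (Inl c), Inr (Inr ()))"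
   | (wa) "t = (Inr (Inr ()), Inl ())" | (wb) "t = (Inr (Inr ()), Inr (Inl ()))"
   | (we) "t = (Inr (Inr ()), Inr (Inr ()))"
proof -
  obtain p q where t: "t = (p, q)" by (cases t)
  show thesis
    by (cases p rule: sum3_cases; cases q rule: u3_cases) (auto simp: t intro: that)
qed

lemma S_cases:
  fixes s :: "('c + unit) + ('c + unit) + unit"
  obtains (X) c where "s = Inl (Inl c)" | (Z) "s = Inl (Inr ())"
   | (Y) c where "s = Inr (Inl (Inl c))" | (YZ) "s = Inr (Inl (Inr ()))"
   | (W) "s = Inr (Inr ())"
  by (cases s rule: sum.exhaust; auto split: sum.splits; metis old.unit.exhaust sum.exhaust)

definition fM :: "('c::finite, 'a::comm_ring_1) scx \<Rightarrow> 'a \<Rightarrow> ('c + 'c + unit) \<times> (unit + unit + unit) \<Rightarrow> ('c + unit) + ('c + unit) + unit \<Rightarrow> 'a" where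
"fM X u t s = (case (t, s) of
   ((Inl i, Inr (Inl _)), Inl (Inl j)) \<Rightarrow> mid i j
 | ((Inr (Inl i), Inr (Inl _)), Inr (Inl (Inl j))) \<Rightarrow> mid i j
 | ((Inr (Inl i), Inl _), Inr (Inr _)) \<Rightarrow> sdelta2 X i
 | ((Inl i, Inr (Inl _)), Inr (Inr _)) \<Rightarrow> sdelta2 X i
 | ((Inr (Inr _), Inl _), Inl (Inr _)) \<Rightarrow> 1
 | ((Inr (Inr _), Inr (Inl _)), Inr (Inl (Inr _))) \<Rightarrow> 1
 | ((Inr (Inr _), Inr (Inr _)), Inr (Inr _)) \<Rightarrow> u
 | _ \<Rightarrow> 0)"

definition gM :: "('c::finite, 'a::comm_ring_1) scx \<Rightarrow> 'a \<Rightarrow> ('c + unit) + ('c + unit) + unit \<Rightarrow> ('c + 'c + unit) \<times> (unit + unit + unit) \<Rightarrow> 'a" where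
"gM X w s t = (case (s, t) of
   (Inl (Inl i), (Inr (Inl j), Inl _)) \<Rightarrow> - epsilon (cdeg X j) * mid i j
 | (Inl (Inl i), (Inl j, Inr (Inl _))) \<Rightarrow> mid i j
 | (Inr (Inl (Inl i)), (Inr (Inl j), Inr (Inl _))) \<Rightarrow> mid i j
 | (Inl (Inl i), (Inl j, Inr (Inr _))) \<Rightarrow> w * sv X i j
 | (Inr (Inl (Inl i)), (Inr (Inl j), Inr (Inr _))) \<Rightarrow> w * sv X i j
 | (Inl (Inr _), (Inl j, Inr (Inr _))) \<Rightarrow> w * sdelta1 X j
 | (Inr (Inl (Inr _)), (Inr (Inl j), Inr (Inr _))) \<Rightarrow> w * sdelta1 X j
 | (Inl (Inr _), (Inr (Inr _), Inl _)) \<Rightarrow> 1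
 | (Inr (Inl (Inr _)), (Inr (Inr _), Inr (Inl _))) \<Rightarrow> 1
 | (Inr (Inr _), (Inr (Inr _), Inr (Inr _))) \<Rightarrow> w
 | _ \<Rightarrow> 0)"

definition kM :: "('c::finite, 'a::comm_ring_1) scx \<Rightarrow> 'a \<Rightarrow> ('c + 'c + unit) \<times> (unit + unit + unit) \<Rightarrow> ('c + 'c + unit) \<times> (unit + unit + unit) \<Rightarrow> 'a" where
"kM X w t t' = (case (t, t') of
   ((Inl i, Inl _), (Inl j, Inr (Inr _))) \<Rightarrow> - epsilon (cdeg X j) * w * mid i j
 | ((Inr (Inl i), Inl _), (Inr (Inl j), Inr (Inr _))) \<Rightarrow> epsilon (cdeg X j) * w * mid i j
 | ((Inl i, Inr (Inl _)), (Inr (Inl j), Inr (Inr _))) \<Rightarrow> w * mid i j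
 | _ \<Rightarrow> 0)"

lemma gf:
  fixes X :: "('c::finite, 'a::comm_ring_1) scx"
  assumes d2: "\<And>i. odd (cdeg X i) \<Longrightarrow> sdelta2 X i = 0" and wu: "w * u = 1"
  shows "mmul (gM X w) (fM X u) = mid"
proof (intro ext)
  fix s1 s2 :: "('c + unit) + ('c + unit) + unit"
  show "mmul (gM X w) (fM X u) s1 s2 = mid s1 s2"
    by (cases s1 rule: S_cases; cases s2 rule: S_cases;
        simp add: mmul_def sums gM_def fM_def mid_def if0_mult epsilon_def d2 wu)
qed

lemma P1: "(\<Sum>j\<in>A. f j * ((w::'a::comm_ring_1) * g j)) = w * (\<Sum>j\<in>A. f j * g j)"
  by (simp add: sum_distrib_left algebra_simps)
lemma P2: "(\<Sum>j\<in>A. (w::'a::comm_ring_1) * f j * g j) = w * (\<Sum>j\<in>A. f j * g j)"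
  by (simp add: sum_distrib_left algebra_simps)
lemma wxu: "(w::'a::comm_ring_1) * u = 1 \<Longrightarrow> w * x * u = x"
  by (metis mult.commute mult.left_commute mult_1_right)

lemma wx0: "(a::'a::comm_ring_1) * b \<noteq> 0 \<Longrightarrow> b \<noteq> 0" by auto

lemma fchain:
  fixes X :: "('c::finite, 'a::comm_ring_1) scx"
  assumes d1: "\<And>j. even (cdeg X j) \<Longrightarrow> sdelta1 X j = 0"
    and d2: "\<And>i. odd (cdeg X i) \<Longrightarrow> sdelta2 X i = 0"
    and dd: "\<And>i j. even (cdeg X i) = even (cdeg X j) \<Longrightarrow> sd X i j = 0"
    and vv: "\<And>i j. even (cdeg X i) \<noteq> even (cdeg X j) \<Longrightarrow> sv X i j = 0"
    and r0: "sr X = 0"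
    and dd2: "\<And>i. (\<Sum>k\<in>UNIV. sd X i k * sdelta2 X k) = 0"
  shows "mmul (dif (tensor (to_bcx X) (to_bcx (O1 u)))) (fM X u) = mmul (fM X u) (dif (to_bcx (susp X)))"
proof (intro ext)
  fix t s
  show "mmul (dif (tensor (to_bcx X) (to_bcx (O1 u)))) (fM X u) t s = mmul (fM X u) (dif (to_bcx (susp X))) t s"
    by (cases t rule: T_cases; cases s rule: S_cases;
        simp add: mmul_def sums sum.distrib sum_negf ring_distribs fM_def mid_def if0_mult epsilon_def assms tensor_def to_bcx_def susp_def O1_def cong: if_cong)
qed

lemma fchi:
  fixes X :: "('c::finite, 'a::comm_ring_1) scx"
  assumes d1: "\<And>j. even (cdeg X j) \<Longrightarrow> sdelta1 X j = 0"
    and d2: "\<And>i. odd (cdeg X i) \<Longrightarrow> sdelta2 X i = 0"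
    and dd: "\<And>i j. even (cdeg X i) = even (cdeg X j) \<Longrightarrow> sd X i j = 0"
    and vv: "\<And>i j. even (cdeg X i) \<noteq> even (cdeg X j) \<Longrightarrow> sv X i j = 0"
    and r0: "sr X = 0"
    and dd2: "\<And>i. (\<Sum>k\<in>UNIV. sd X i k * sdelta2 X k) = 0"
    and d1d: "\<And>j. (\<Sum>k\<in>UNIV. sdelta1 X k * sd X k j) = 0"
    and ddd: "\<And>i j. (\<Sum>k\<in>UNIV. sd X i k * sd X k j) = 0"
    and vd: "\<And>i j. (\<Sum>k\<in>UNIV. sv X i k * sd X k j) = (\<Sum>k\<in>UNIV. sd X i k * sv X k j) - sdelta2 X i * sdelta1 X j"
    and wu: "w * u = 1" "u * w = 1"
  shows "mmul (chi (tensor (to_bcx X) (to_bcx (O1 u)))) (fM X u) = mmul (fM X u) (chi (to_bcx (susp X)))"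
proof (intro ext)
  fix t s
  show "mmul (chi (tensor (to_bcx X) (to_bcx (O1 u)))) (fM X u) t s = mmul (fM X u) (chi (to_bcx (susp X))) t s"
    by (cases t rule: T_cases; cases s rule: S_cases;
        simp add: mmul_def sums sum.distrib sum_negf ring_distribs fM_def gM_def kM_def mid_def if0_mult epsilon_def assms tensor_def to_bcx_def susp_def O1_def cong: if_cong)
qed

lemma gchain:
  fixes X :: "('c::finite, 'a::comm_ring_1) scx"
  assumes d1: "\<And>j. even (cdeg X j) \<Longrightarrow> sdelta1 X j = 0"
    and d2: "\<And>i. odd (cdeg X i) \<Longrightarrow> sdelta2 X i = 0"
    and dd: "\<And>i j. even (cdeg X i) = even (cdeg X j) \<Longrightarrow> sd X i j = 0"
    and vv: "\<And>i j. even (cdeg X i) \<noteq> even (cdeg X j) \<Longrightarrow> sv X i j = 0"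
    and r0: "sr X = 0"
    and dd2: "\<And>i. (\<Sum>k\<in>UNIV. sd X i k * sdelta2 X k) = 0"
    and d1d: "\<And>j. (\<Sum>k\<in>UNIV. sdelta1 X k * sd X k j) = 0"
    and ddd: "\<And>i j. (\<Sum>k\<in>UNIV. sd X i k * sd X k j) = 0"
    and vd: "\<And>i j. (\<Sum>k\<in>UNIV. sv X i k * sd X k j) = (\<Sum>k\<in>UNIV. sd X i k * sv X k j) - sdelta2 X i * sdelta1 X j"
    and wu: "w * u = 1" "u * w = 1"
  shows "mmul (dif (to_bcx (susp X))) (gM X w) = mmul (gM X w) (dif (tensor (to_bcx X) (to_bcx (O1 u))))"
proof (intro ext)
  fix t s
  show "mmul (dif (to_bcx (susp X))) (gM X w) t s = mmul (gM X w) (dif (tensor (to_bcx X) (to_bcx (O1 u)))) t s"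
    by (cases t rule: S_cases; cases s rule: T_cases;
        simp add: mmul_def sums sum.distrib sum_negf ring_distribs fM_def gM_def kM_def mid_def if0_mult epsilon_def assms tensor_def to_bcx_def susp_def O1_def cong: if_cong;
        (simp only: P1 P2 wxu[OF wu(1)])?; (simp only: vd d1d)?; (simp add: algebra_simps)?)
qed

lemma gchi:
  fixes X :: "('c::finite, 'a::comm_ring_1) scx"
  assumes d1: "\<And>j. even (cdeg X j) \<Longrightarrow> sdelta1 X j = 0"
    and d2: "\<And>i. odd (cdeg X i) \<Longrightarrow> sdelta2 X i = 0"
    and dd: "\<And>i j. even (cdeg X i) = even (cdeg X j) \<Longrightarrow> sd X i j = 0"
    and vv: "\<And>i j. even (cdeg X i) \<noteq> even (cdeg X j) \<Longrightarrow> sv X i j = 0"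
    and r0: "sr X = 0"
    and dd2: "\<And>i. (\<Sum>k\<in>UNIV. sd X i k * sdelta2 X k) = 0"
    and d1d: "\<And>j. (\<Sum>k\<in>UNIV. sdelta1 X k * sd X k j) = 0"
    and ddd: "\<And>i j. (\<Sum>k\<in>UNIV. sd X i k * sd X k j) = 0"
    and vd: "\<And>i j. (\<Sum>k\<in>UNIV. sv X i k * sd X k j) = (\<Sum>k\<in>UNIV. sd X i k * sv X k j) - sdelta2 X i * sdelta1 X j"
    and wu: "w * u = 1" "u * w = 1"
  shows "mmul (chi (to_bcx (susp X))) (gM X w) = mmul (gM X w) (chi (tensor (to_bcx X) (to_bcx (O1 u))))"
proof (intro ext)
  fix t s
  show "mmul (chi (to_bcx (susp X))) (gM X w) t s = mmul (gM X w) (chi (tensor (to_bcx X) (to_bcx (O1 u)))) t s"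
    by (cases t rule: S_cases; cases s rule: T_cases;
        simp add: mmul_def sums sum.distrib sum_negf ring_distribs fM_def gM_def kM_def mid_def if0_mult epsilon_def assms tensor_def to_bcx_def susp_def O1_def cong: if_cong)
qed

lemma khtpy:
  fixes X :: "('c::finite, 'a::comm_ring_1) scx"
  assumes d1: "\<And>j. even (cdeg X j) \<Longrightarrow> sdelta1 X j = 0"
    and d2: "\<And>i. odd (cdeg X i) \<Longrightarrow> sdelta2 X i = 0"
    and dd: "\<And>i j. even (cdeg X i) = even (cdeg X j) \<Longrightarrow> sd X i j = 0"
    and vv: "\<And>i j. even (cdeg X i) \<noteq> even (cdeg X j) \<Longrightarrow> sv X i j = 0"
    and r0: "sr X = 0"
    and dd2: "\<And>i. (\<Sum>k\<in>UNIV. sd X i k * sdelta2 X k) = 0"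
    and d1d: "\<And>j. (\<Sum>k\<in>UNIV. sdelta1 X k * sd X k j) = 0"
    and ddd: "\<And>i j. (\<Sum>k\<in>UNIV. sd X i k * sd X k j) = 0"
    and vd: "\<And>i j. (\<Sum>k\<in>UNIV. sv X i k * sd X k j) = (\<Sum>k\<in>UNIV. sd X i k * sv X k j) - sdelta2 X i * sdelta1 X j"
    and wu: "w * u = 1" "u * w = 1"
  shows "(\<lambda>t s. mmul (dif (tensor (to_bcx X) (to_bcx (O1 u)))) (kM X w) t s + mmul (kM X w) (dif (tensor (to_bcx X) (to_bcx (O1 u)))) t s) = (\<lambda>t s. mmul (fM X u) (gM X w) t s - mid t s)"
proof (intro ext)
  fix t s
  show "(\<lambda>t s. mmul (dif (tensor (to_bcx X) (to_bcx (O1 u)))) (kM X w) t s + mmul (kM X w) (dif (tensor (to_bcx X) (to_bcx (O1 u)))) t s) t s = (\<lambda>t s. mmul (fM X u) (gM X w) t s - mid t s) t s"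
    by (cases t rule: T_cases; cases s rule: T_cases;
        simp add: mmul_def sums sum.distrib sum_negf ring_distribs fM_def gM_def kM_def mid_def if0_mult epsilon_def assms tensor_def to_bcx_def susp_def O1_def cong: if_cong)
qed

lemma kchi:
  fixes X :: "('c::finite, 'a::comm_ring_1) scx"
  assumes d1: "\<And>j. even (cdeg X j) \<Longrightarrow> sdelta1 X j = 0"
    and d2: "\<And>i. odd (cdeg X i) \<Longrightarrow> sdelta2 X i = 0"
    and dd: "\<And>i j. even (cdeg X i) = even (cdeg X j) \<Longrightarrow> sd X i j = 0"
    and vv: "\<And>i j. even (cdeg X i) \<noteq> even (cdeg X j) \<Longrightarrow> sv X i j = 0"
    and r0: "sr X = 0"
    and dd2: "\<And>i. (\<Sum>k\<in>UNIV. sd X i k * sdelta2 X k) = 0"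
    and d1d: "\<And>j. (\<Sum>k\<in>UNIV. sdelta1 X k * sd X k j) = 0"
    and ddd: "\<And>i j. (\<Sum>k\<in>UNIV. sd X i k * sd X k j) = 0"
    and vd: "\<And>i j. (\<Sum>k\<in>UNIV. sv X i k * sd X k j) = (\<Sum>k\<in>UNIV. sd X i k * sv X k j) - sdelta2 X i * sdelta1 X j"
    and wu: "w * u = 1" "u * w = 1"
  shows "mmul (chi (tensor (to_bcx X) (to_bcx (O1 u)))) (kM X w) = (\<lambda>t s. - mmul (kM X w) (chi (tensor (to_bcx X) (to_bcx (O1 u)))) t s)"
proof (intro ext)
  fix t s
  show "mmul (chi (tensor (to_bcx X) (to_bcx (O1 u)))) (kM X w) t s = (\<lambda>t s. - mmul (kM X w) (chi (tensor (to_bcx X) (to_bcx (O1 u)))) t s) t s"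
    by (cases t rule: T_cases; cases s rule: T_cases;
        simp add: mmul_def sums sum.distrib sum_negf ring_distribs fM_def gM_def kM_def mid_def if0_mult epsilon_def assms tensor_def to_bcx_def susp_def O1_def cong: if_cong)
qed

lemma scx_facts:
  fixes X :: "('c::finite, 'a::comm_ring_1) scx"
  assumes "is_scx X"
  shows gd: "\<And>i j. sd X i j \<noteq> 0 \<Longrightarrow> cdeg X j = cdeg X i + 1"
    and gv: "\<And>i j. sv X i j \<noteq> 0 \<Longrightarrow> cdeg X j = cdeg X i + 2"
    and g1: "\<And>j. sdelta1 X j \<noteq> 0 \<Longrightarrow> cdeg X j = 1"
    and g2: "\<And>i. sdelta2 X i \<noteq> 0 \<Longrightarrow> cdeg X i = -2"
    and r0: "sr X = 0"
    and ddd: "\<And>i j. (\<Sum>k\<in>UNIV. sd X i k * sd X k j) = 0"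
    and vd: "\<And>i j. (\<Sum>k\<in>UNIV. sv X i k * sd X k j) = (\<Sum>k\<in>UNIV. sd X i k * sv X k j) - sdelta2 X i * sdelta1 X j"
    and d1d: "\<And>j. (\<Sum>k\<in>UNIV. sdelta1 X k * sd X k j) = 0"
    and dd2: "\<And>i. (\<Sum>k\<in>UNIV. sd X i k * sdelta2 X k) = 0"
proof -
  have G: "graded (deg (to_bcx X)) (deg (to_bcx X)) (-1) (dif (to_bcx X))"
    and Z: "mmul (dif (to_bcx X)) (dif (to_bcx X)) = (\<lambda>_ _. 0)"
    using assms by (auto simp: is_scx_def)
  have G': "\<And>a b. dif (to_bcx X) a b \<noteq> 0 \<Longrightarrow> deg (to_bcx X) a = deg (to_bcx X) b - 1"
    using G by (auto simp: graded_def)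
  have Z': "\<And>a b. mmul (dif (to_bcx X)) (dif (to_bcx X)) a b = 0"
    using Z by simp
  show "\<And>i j. sd X i j \<noteq> 0 \<Longrightarrow> cdeg X j = cdeg X i + 1"
    using G'[of "Inl i" "Inl j" for i j] by (simp add: to_bcx_def)
  show "\<And>i j. sv X i j \<noteq> 0 \<Longrightarrow> cdeg X j = cdeg X i + 2"
    using G'[of "Inr (Inl i)" "Inl j" for i j] by (simp add: to_bcx_def, metis add.commute)
  show "\<And>j. sdelta1 X j \<noteq> 0 \<Longrightarrow> cdeg X j = 1"
    using G'[of "Inr (Inr ())" "Inl j" for j] by (simp add: to_bcx_def)
  show "\<And>i. sdelta2 X i \<noteq> 0 \<Longrightarrow> cdeg X i = -2"
  proof -
    fix i assume "sdelta2 X i \<noteq> 0"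
    with G'[of "Inr (Inl i)" "Inr (Inr ())"] show "cdeg X i = -2" by (simp add: to_bcx_def)
  qed
  show r: "sr X = 0"
    using G'[of "Inr (Inr ())" "Inr (Inr ())"] by (simp add: to_bcx_def) blast
  show "\<And>i j. (\<Sum>k\<in>UNIV. sd X i k * sd X k j) = 0"
    using Z'[of "Inl i" "Inl j" for i j] by (simp add: to_bcx_def mmul_def sums)
  show "\<And>i j. (\<Sum>k\<in>UNIV. sv X i k * sd X k j) = (\<Sum>k\<in>UNIV. sd X i k * sv X k j) - sdelta2 X i * sdelta1 X j"
    using Z'[of "Inr (Inl i)" "Inl j" for i j] by (simp add: to_bcx_def mmul_def sums sum_negf algebra_simps)
  show "\<And>j. (\<Sum>k\<in>UNIV. sdelta1 X k * sd X k j) = 0"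
    using Z'[of "Inr (Inr ())" "Inl j" for j] r by (simp add: to_bcx_def mmul_def sums)
  show "\<And>i. (\<Sum>k\<in>UNIV. sd X i k * sdelta2 X k) = 0"
    using Z'[of "Inr (Inl i)" "Inr (Inr ())" for i] r by (simp add: to_bcx_def mmul_def sums sum_negf)
qed

lemma fgr:
  fixes X :: "('c::finite, 'a::comm_ring_1) scx"
  assumes gv: "\<And>i j. sv X i j \<noteq> 0 \<Longrightarrow> cdeg X j = cdeg X i + 2"
    and g1: "\<And>j. sdelta1 X j \<noteq> 0 \<Longrightarrow> cdeg X j = 1"
    and g2: "\<And>i. sdelta2 X i \<noteq> 0 \<Longrightarrow> cdeg X i = -2"
  shows "graded (deg (tensor (to_bcx X) (to_bcx (O1 u)))) (deg (to_bcx (susp X))) 0 (fM X u)"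
  unfolding graded_def
proof (intro allI impI)
  fix t s assume "fM X u t s \<noteq> 0"
  then show "deg (tensor (to_bcx X) (to_bcx (O1 u))) t = deg (to_bcx (susp X)) s + 0"
    by (cases t rule: T_cases; cases s rule: S_cases;
        auto simp: fM_def gM_def kM_def tensor_def to_bcx_def susp_def O1_def mid_def split: if_splits dest: gv g1 g2 wx0)
qed

lemma ggr:
  fixes X :: "('c::finite, 'a::comm_ring_1) scx"
  assumes gv: "\<And>i j. sv X i j \<noteq> 0 \<Longrightarrow> cdeg X j = cdeg X i + 2"
    and g1: "\<And>j. sdelta1 X j \<noteq> 0 \<Longrightarrow> cdeg X j = 1"
    and g2: "\<And>i. sdelta2 X i \<noteq> 0 \<Longrightarrow> cdeg X i = -2"
  shows "graded (deg (to_bcx (susp X))) (deg (tensor (to_bcx X) (to_bcx (O1 u)))) 0 (gM X w)"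
  unfolding graded_def
proof (intro allI impI)
  have gvw: "\<And>i j. w * sv X i j \<noteq> 0 \<Longrightarrow> cdeg X j = cdeg X i + 2" using gv by force
  fix t s assume "gM X w t s \<noteq> 0"
  then show "deg (to_bcx (susp X)) t = deg (tensor (to_bcx X) (to_bcx (O1 u))) s + 0"
    by (cases t rule: S_cases; cases s rule: T_cases;
        auto simp: fM_def gM_def kM_def tensor_def to_bcx_def susp_def O1_def mid_def split: if_splits dest: gv g1 g2 wx0 gvw)
qed

lemma kgr:
  fixes X :: "('c::finite, 'a::comm_ring_1) scx"
  assumes gv: "\<And>i j. sv X i j \<noteq> 0 \<Longrightarrow> cdeg X j = cdeg X i + 2"
    and g1: "\<And>j. sdelta1 X j \<noteq> 0 \<Longrightarrow> cdeg X j = 1"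
    and g2: "\<And>i. sdelta2 X i \<noteq> 0 \<Longrightarrow> cdeg X i = -2"
  shows "graded (deg (tensor (to_bcx X) (to_bcx (O1 u)))) (deg (tensor (to_bcx X) (to_bcx (O1 u)))) 1 (kM X w)"
  unfolding graded_def
proof (intro allI impI)
  fix t s assume "kM X w t s \<noteq> 0"
  then show "deg (tensor (to_bcx X) (to_bcx (O1 u))) t = deg (tensor (to_bcx X) (to_bcx (O1 u))) s + 1"
    by (cases t rule: T_cases; cases s rule: T_cases;
        auto simp: fM_def gM_def kM_def tensor_def to_bcx_def susp_def O1_def mid_def split: if_splits dest: gv g1 g2 wx0)
qed

theorem proposition2p5:
  fixes X :: "('c::finite, 'a::comm_ring_1) scx" and u :: 'a
  assumes "is_scx X" and "u dvd 1"
  shows "s_htpy_equiv (to_bcx (susp X)) (tensor (to_bcx X) (to_bcx (O1 u)))"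
proof -
  obtain w where uw: "u * w = 1" using assms(2) by (metis dvd_def)
  then have wu: "w * u = 1" by (simp add: mult.commute)
  note F = scx_facts[OF assms(1)]
  have d1: "\<And>j. even (cdeg X j) \<Longrightarrow> sdelta1 X j = 0"
    using F(3) by fastforce
  have d2: "\<And>i. odd (cdeg X i) \<Longrightarrow> sdelta2 X i = 0"
    using F(4) by fastforce
  have dd: "\<And>i j. even (cdeg X i) = even (cdeg X j) \<Longrightarrow> sd X i j = 0"
    using F(1) by fastforce
  have vv: "\<And>i j. even (cdeg X i) \<noteq> even (cdeg X j) \<Longrightarrow> sv X i j = 0"
    using F(2) by fastforce
  note A = d1 d2 dd vv F(5) F(9) F(8) F(6) F(7) wu uw
  show ?thesis
    unfolding s_htpy_equiv_def
  proof (intro exI conjI)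
    show "s_morphism (to_bcx (susp X)) (tensor (to_bcx X) (to_bcx (O1 u))) (fM X u)"
      unfolding s_morphism_def using fgr[OF F(2,3,4)] fchain[OF A(1-6)] fchi[OF A] by blast
    show "s_morphism (tensor (to_bcx X) (to_bcx (O1 u))) (to_bcx (susp X)) (gM X w)"
      unfolding s_morphism_def using ggr[OF F(2,3,4)] gchain[OF A] gchi[OF A] by blast
    show "s_homotopy (to_bcx (susp X)) (to_bcx (susp X)) (mmul (gM X w) (fM X u)) mid (\<lambda>_ _. 0)"
      unfolding s_homotopy_def using gf[OF d2 wu] by (simp add: graded_def mmul_def)
    show "s_homotopy (tensor (to_bcx X) (to_bcx (O1 u))) (tensor (to_bcx X) (to_bcx (O1 u))) (mmul (fM X u) (gM X w)) mid (kM X w)"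
      unfolding s_homotopy_def using kgr[OF F(2,3,4)] khtpy[OF A] kchi[OF A]
      by (metis (no_types, lifting))
  qed
qed
end
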